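(* There exist constants $C_1,C_2>0$ (depending only on $r$) such that for all $x\ge1$, $$\limsup_{N\to\infty}\sum_{k=1}^N P\big(R_{k,N}>xN^{1-r}\big)\le C_1e^{-C_2x^{1/r}}.$$
   Context: Fix $r\in(0,1)$. Consider the following multitype Yule process. At time $0$ a single individual of type $1$ is born. No individual ever dies, and each individual independently gives birth at rate $1$. When a new individual is born, independently of everything else, with probability $1-r$ it has the same type as its parent and with probability $r$ it has a new type different from all previously observed types. Individuals are numbered in order of birth (the initial one is the 1st); if the $k$-th individual born has a type different from its parent, that type is called type $k$. Let $T_N$ be the time the population size reaches $N$, and $R_{k,N}$ the number of type-$k$ individuals at time $T_N$. *)

theory Defs
  imports "HOL-Probability.Probability"
begin

text \<open>Embedded jump chain of the multitype Yule process.  A state is the list of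
types of the individuals in birth order (the i-th entry, 0-based, is the type of
the (i+1)-th individual).  Types are named by the (1-based) birth index of the
individual that founded them; the initial individual has type 1.
At each birth the parent is uniform among the current individuals (all birth
rates equal 1); with probability r the newborn (individual number length xs + 1)
gets the new type length xs + 1, otherwise the parent's type.\<close>

definition yule_step :: "real \<Rightarrow> nat list \<Rightarrow> nat list pmf" where
  "yule_step r xs =
     bind_pmf (pmf_of_set {..<length xs}) (\<lambda>p.
     bind_pmf (bernoulli_pmf r) (\<lambda>b.
     return_pmf (xs @ [if b then Suc (length xs) else xs ! p])))"

text \<open>Law of the population (list of types) at time T_N, the time the population
size reaches N (N \<ge> 1).\<close>
fun yule_state :: "real \<Rightarrow> nat \<Rightarrow> nat list pmf" where
  "yule_state r 0 = return_pmf []"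
| "yule_state r (Suc 0) = return_pmf [1]"
| "yule_state r (Suc (Suc n)) = bind_pmf (yule_state r (Suc n)) (yule_step r)"

definition type_count :: "nat \<Rightarrow> nat list \<Rightarrow> nat" where
  "type_count k xs = length (filter (\<lambda>t. t = k) xs)"

end

theory Submission
  imports Defs
begin


lemma yule_support:
  assumes "N \<ge> 1" "xs \<in> set_pmf (yule_state r N)"
  shows "length xs = N \<and> set xs \<subseteq> {1..N}"
  using assms
proof (induction r N arbitrary: xs rule: yule_state.induct)
  case (1 r) then show ?case by simp
next
  case (2 r) then show ?case by simp
next
  case (3 r n)
  from 3(3) obtain ys where ys: "ys \<in> set_pmf (yule_state r (Suc n))" "xs \<in> set_pmf (yule_step r ys)"
    by auto
  have IH: "length ys = Suc n \<and> set ys \<subseteq> {1..Suc n}" using 3(1)[OF _ ys(1)] by simp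
  then have ne: "{..<length ys} \<noteq> {}" by auto
  from ys(2) obtain p b where pb: "p < length ys" "xs = ys @ [if b then Suc (length ys) else ys ! p]"
    unfolding yule_step_def using ne by (auto simp: set_pmf_of_set)
  have "ys ! p \<in> {1..Suc n}" using IH nth_mem[OF pb(1)] by blast
  then show ?case using IH pb by auto
qed

definition lists_on :: "nat \<Rightarrow> nat list set" where
  "lists_on N = {xs. set xs \<subseteq> {1..N} \<and> length xs = N}"

lemma finite_lists_on: "finite (lists_on N)"
  unfolding lists_on_def by (rule finite_lists_length_eq) simp

lemma yule_support_fin:
  assumes "N \<ge> 1"
  shows "set_pmf (yule_state r N) \<subseteq> lists_on N" "finite (set_pmf (yule_state r N))"
proof -
  show 1: "set_pmf (yule_state r N) \<subseteq> lists_on N"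
    using yule_support[OF assms] unfolding lists_on_def by auto
  show "finite (set_pmf (yule_state r N))"
    using finite_subset[OF 1 finite_lists_on] .
qed

lemma exp_bind:
  fixes h :: "'b \<Rightarrow> real"
  assumes "finite (set_pmf p)" "\<And>x. x \<in> set_pmf p \<Longrightarrow> finite (set_pmf (f x))"
  shows "measure_pmf.expectation (bind_pmf p f) h =
         measure_pmf.expectation p (\<lambda>x. measure_pmf.expectation (f x) h)"
  apply (subst pmf_expectation_bind[OF assms(1) assms(2) order_refl])
   apply simp
  apply (subst integral_measure_pmf[OF assms(1)])
   apply simp
  apply simp
  done

lemma exp_cong:
  fixes f g :: "'a \<Rightarrow> real"
  assumes "\<And>x. x \<in> set_pmf p \<Longrightarrow> f x = g x"
  shows "measure_pmf.expectation p f = measure_pmf.expectation p g"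
  using assms by (intro integral_cong_AE) (auto simp: AE_measure_pmf_iff)

lemma exp_step:
  fixes g :: "nat list \<Rightarrow> real"
  assumes "length xs = N" "N \<ge> 1" "0 \<le> r" "r \<le> 1"
  shows "measure_pmf.expectation (yule_step r xs) g =
     r * g (xs @ [Suc N]) + (1 - r) * (\<Sum>p<N. g (xs @ [xs ! p])) / N"
proof -
  have ne: "{..<length xs} \<noteq> {}" using assms by (simp add: lessThan_empty_iff)
  have "measure_pmf.expectation (yule_step r xs) g =
     measure_pmf.expectation (pmf_of_set {..<length xs}) (\<lambda>p.
       measure_pmf.expectation (bernoulli_pmf r) (\<lambda>b.
        measure_pmf.expectation (return_pmf (xs @ [if b then Suc (length xs) else xs ! p])) g))"
    unfolding yule_step_def
    apply (subst exp_bind)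
      apply (simp_all add: ne)
    apply (subst exp_bind)
      apply (simp_all add: ne)
    done
  also have "\<dots> = (\<Sum>p<N. r * g (xs @ [Suc N]) + (1 - r) * g (xs @ [xs ! p])) / N"
    using assms ne by (simp add: integral_pmf_of_set algebra_simps)
  also have "\<dots> = r * g (xs @ [Suc N]) + (1 - r) * (\<Sum>p<N. g (xs @ [xs ! p])) / N"
  proof -
    have "(\<Sum>p<N. r * g (xs @ [Suc N]) + (1 - r) * g (xs @ [xs ! p]))
       = real N * (r * g (xs @ [Suc N])) + (1 - r) * (\<Sum>p<N. g (xs @ [xs ! p]))"
      by (simp add: sum.distrib sum_distrib_left)
    then show ?thesis using assms by (simp add: add_divide_distrib)
  qed
  finally show ?thesis .
qed



lemma type_count_snoc: "type_count k (xs @ [t]) = type_count k xs + (if t = k then 1 else 0)"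
  by (simp add: type_count_def)

lemma count_card: "card ({..<length xs} \<inter> {p. xs ! p = k}) = type_count k xs"
  unfolding type_count_def by (simp add: length_filter_conv_card Int_def)

lemma poch_shift: "(c::real) * pochhammer (c + 1) m = pochhammer c m * (c + m)"
  by (metis pochhammer_rec pochhammer_Suc)

lemma exp_step_old:
  assumes "length xs = N" "N \<ge> 1" "0 \<le> r" "r \<le> 1" "k \<le> N"
  shows "measure_pmf.expectation (yule_step r xs) (\<lambda>ys. pochhammer (real (type_count k ys)) m)
       = pochhammer (real (type_count k xs)) m * (1 + (1 - r) * m / N)"
proof -
  define c where "c = type_count k xs"
  define P where "P = (\<lambda>z::real. pochhammer z m)"
  have sum: "(\<Sum>p<N. P (real (type_count k (xs @ [xs ! p]))))
      = real N * P c + real c * (P (real c + 1) - P c)"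
  proof -
    have "(\<Sum>p<N. P (real (type_count k (xs @ [xs ! p]))))
        = (\<Sum>p<N. P c + (if xs ! p = k then P (real c + 1) - P c else 0))"
      by (intro sum.cong) (auto simp: type_count_snoc c_def add.commute)
    also have "\<dots> = real N * P c + (\<Sum>p\<in>{..<N} \<inter> {p. xs ! p = k}. P (real c + 1) - P c)"
      by (simp add: sum.distrib sum.If_cases)
    also have "\<dots> = real N * P c + real c * (P (real c + 1) - P c)"
      using count_card[of xs k] assms(1) by (simp add: c_def)
    finally show ?thesis .
  qed
  have key: "real c * (P (real c + 1) - P c) = m * P c"
    using poch_shift[of "real c" m] unfolding P_def by (simp add: algebra_simps)
  have "measure_pmf.expectation (yule_step r xs) (\<lambda>ys. P (real (type_count k ys)))
      = r * P c + (1 - r) * (real N * P c + m * P c) / N"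
    apply (subst exp_step[OF assms(1-4)])
    using assms(5) sum key by (simp add: type_count_snoc c_def)
  also have "\<dots> = P c * (1 + (1 - r) * m / N)"
    using assms by (simp add: field_simps)
  finally show ?thesis unfolding P_def c_def .
qed

lemma exp_step_new:
  assumes "length xs = N" "N \<ge> 1" "0 \<le> r" "r \<le> 1" "set xs \<subseteq> {1..N}" "m \<ge> 1"
  shows "measure_pmf.expectation (yule_step r xs) (\<lambda>ys. pochhammer (real (type_count (Suc N) ys)) m)
       = r * fact m"
proof -
  have c0: "type_count (Suc N) xs = 0" using assms(5) unfolding type_count_def
    by (auto simp: filter_empty_conv)
  have "xs ! p \<noteq> Suc N" if "p < N" for p
  proof -
    have "xs ! p \<in> {1..N}" using subsetD[OF assms(5) nth_mem[of p xs]] assms(1) that by blast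
    then show ?thesis by auto
  qed
  then have "(\<Sum>p<N. pochhammer (real (type_count (Suc N) (xs @ [xs ! p]))) m) = 0"
    by (intro sum.neutral) (use assms(6) in \<open>auto simp: type_count_snoc c0 pochhammer_0_left\<close>)
  then show ?thesis
    apply (subst exp_step[OF assms(1-4)])
    by (simp add: type_count_snoc c0 pochhammer_fact)
qed



definition Qp :: "real \<Rightarrow> nat \<Rightarrow> nat \<Rightarrow> real" where
  "Qp s k N = (\<Prod>n\<in>{k..<N}. 1 + s / real n)"

lemma Qp_Suc: "k \<le> N \<Longrightarrow> Qp s k (Suc N) = Qp s k N * (1 + s / real N)"
  unfolding Qp_def by (simp add: prod.atLeastLessThan_Suc)

lemma Qp_same[simp]: "Qp s k k = 1"
  unfolding Qp_def by simp

lemma Qp_nonneg: "0 \<le> s \<Longrightarrow> 0 \<le> Qp s k N"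
  unfolding Qp_def by (intro prod_nonneg) auto

lemma finite_step: "xs \<noteq> [] \<Longrightarrow> finite (set_pmf (yule_step r xs))"
  unfolding yule_step_def by (simp add: set_pmf_of_set lessThan_empty_iff)

lemma E_bound:
  assumes r: "0 \<le> r" "r \<le> 1" and m: "m \<ge> 1" and N: "N \<ge> 1" and k: "1 \<le> k" "k \<le> N"
  shows "measure_pmf.expectation (yule_state r N) (\<lambda>xs. pochhammer (real (type_count k xs)) m)
         \<le> fact m * Qp ((1 - r) * m) k N"
  using N k
proof (induction N arbitrary: k rule: nat_induct_at_least)
  case base
  then have "k = 1" by simp
  then show ?case by (simp add: type_count_def pochhammer_fact)
next
  case (Suc N)
  let ?s = "(1 - r) * m"
  let ?P = "\<lambda>k xs. pochhammer (real (type_count k xs)) m"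
  obtain n' where n': "N = Suc n'" using Suc(1) by (cases N) auto
  have ys: "yule_state r (Suc N) = bind_pmf (yule_state r N) (yule_step r)"
    using n' by simp
  have fin: "finite (set_pmf (yule_state r N))" using yule_support_fin(2)[OF Suc(1)] .
  have sup: "\<And>xs. xs \<in> set_pmf (yule_state r N) \<Longrightarrow> length xs = N \<and> set xs \<subseteq> {1..N}"
    using yule_support[OF Suc(1)] by blast
  have fin2: "\<And>xs. xs \<in> set_pmf (yule_state r N) \<Longrightarrow> finite (set_pmf (yule_step r xs))"
  proof -
    fix xs assume "xs \<in> set_pmf (yule_state r N)"
    then have "length xs = N" using sup by blast
    then have "xs \<noteq> []" using Suc(1) by auto
    then show "finite (set_pmf (yule_step r xs))" by (rule finite_step)
  qed
  have E1: "measure_pmf.expectation (yule_state r (Suc N)) (?P k)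
      = measure_pmf.expectation (yule_state r N) (\<lambda>xs. measure_pmf.expectation (yule_step r xs) (?P k))"
    unfolding ys by (rule exp_bind[OF fin fin2])
  show ?case
  proof (cases "k \<le> N")
    case True
    have "measure_pmf.expectation (yule_state r (Suc N)) (?P k)
       = measure_pmf.expectation (yule_state r N) (\<lambda>xs. ?P k xs * (1 + ?s / N))"
      unfolding E1 using sup Suc(1) r True
      by (intro exp_cong) (simp add: exp_step_old)
    also have "\<dots> = measure_pmf.expectation (yule_state r N) (?P k) * (1 + ?s / N)"
      by simp
    also have "\<dots> \<le> fact m * Qp ?s k N * (1 + ?s / N)"
      using Suc.IH[OF Suc.prems(1) True] r
      by (intro mult_right_mono) (auto simp: Suc(1))
    also have "\<dots> = fact m * Qp ?s k (Suc N)" using True by (simp add: Qp_Suc)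
    finally show ?thesis .
  next
    case False
    then have kN: "k = Suc N" using Suc.prems by simp
    have "measure_pmf.expectation (yule_state r (Suc N)) (?P k)
       = measure_pmf.expectation (yule_state r N) (\<lambda>xs. r * fact m)"
      unfolding E1 using sup Suc(1) r m kN
      by (intro exp_cong) (simp add: exp_step_new)
    also have "\<dots> = r * fact m" by simp
    also have "\<dots> \<le> fact m * Qp ?s k (Suc N)" using kN r by simp
    finally show ?thesis .
  qed
qed



lemma poch_nonneg: "0 \<le> (c::real) \<Longrightarrow> 0 \<le> pochhammer c m"
  by (induction m) (auto simp: pochhammer_Suc)

lemma poch_ge_pow: "0 \<le> (c::real) \<Longrightarrow> c ^ m \<le> pochhammer c m"
proof (induction m)
  case 0 then show ?case by simp
next
  case (Suc m)
  have "c ^ Suc m = c ^ m * c" by simp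
  also have "\<dots> \<le> pochhammer c m * (c + real m)"
    using Suc poch_nonneg[of c m] by (intro mult_mono) auto
  finally show ?case by (simp add: pochhammer_Suc)
qed

lemma markov:
  assumes "N \<ge> 1" "y > 0"
  shows "measure_pmf.prob (yule_state r N) {xs. real (type_count k xs) > y}
      \<le> measure_pmf.expectation (yule_state r N) (\<lambda>xs. pochhammer (real (type_count k xs)) m) / y ^ m"
proof -
  let ?A = "{xs. real (type_count k xs) > y}"
  have fin: "finite (set_pmf (yule_state r N))" using yule_support_fin(2)[OF assms(1)] .
  have "measure_pmf.prob (yule_state r N) ?A = measure_pmf.expectation (yule_state r N) (indicator ?A)"
    by simp
  also have "\<dots> \<le> measure_pmf.expectation (yule_state r N) (\<lambda>xs. pochhammer (real (type_count k xs)) m / y ^ m)"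
  proof (intro integral_mono integrable_measure_pmf_finite[OF fin])
    fix xs
    have p0: "0 \<le> pochhammer (real (type_count k xs)) m"
      using poch_nonneg[of "real (type_count k xs)" m] by simp
    show "indicator ?A xs \<le> pochhammer (real (type_count k xs)) m / y ^ m"
    proof (cases "xs \<in> ?A")
      case True
      then have "y ^ m \<le> real (type_count k xs) ^ m"
        using assms(2) by (intro power_mono) auto
      also have "\<dots> \<le> pochhammer (real (type_count k xs)) m" by (rule poch_ge_pow) simp
      finally show ?thesis using True assms(2) by simp
    next
      case False
      then show ?thesis using p0 assms(2) by simp
    qed
  qed
  also have "\<dots> = measure_pmf.expectation (yule_state r N) (\<lambda>xs. pochhammer (real (type_count k xs)) m) / y ^ m"
    by simp
  finally show ?thesis .
qed

lemma telescope:
  assumes "N \<ge> 1"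
  shows "(s - 1) * (\<Sum>k=1..N. Qp s k N) = s * Qp s 1 N - N"
  using assms
proof (induction N rule: nat_induct_at_least)
  case base then show ?case by simp
next
  case (Suc N)
  have "(\<Sum>k=1..Suc N. Qp s k (Suc N)) = (\<Sum>k=1..N. Qp s k (Suc N)) + 1"
    by simp
  also have "(\<Sum>k=1..N. Qp s k (Suc N)) = (\<Sum>k=1..N. Qp s k N) * (1 + s / N)"
    by (simp add: Qp_Suc sum_distrib_right)
  finally have e: "(\<Sum>k=1..Suc N. Qp s k (Suc N)) = (\<Sum>k=1..N. Qp s k N) * (1 + s / N) + 1" .
  have q: "Qp s 1 (Suc N) = Qp s 1 N * (1 + s / N)" using Suc(1) by (simp add: Qp_Suc)
  define S where "S = (\<Sum>k=1..N. Qp s k N)"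
  have "(s - 1) * (S * (1 + s / N) + 1) = ((s - 1) * S) * (1 + s / N) + (s - 1)"
    by (simp add: ring_distribs)
  also have "\<dots> = (s * Qp s 1 N - N) * (1 + s / N) + (s - 1)"
    using Suc.IH unfolding S_def by simp
  also have "\<dots> = s * (Qp s 1 N * (1 + s / N)) - (N + 1)"
    using Suc(1) by (simp add: field_simps)
  finally show ?case unfolding e q S_def by simp
qed

lemma factor_bound:
  assumes "n \<ge> 2" "s \<ge> 0"
  shows "1 + s / real n \<le> (real n / (real n - 1)) powr s"
proof -
  have n: "real n \<ge> 2" using assms by simp
  have "ln ((real n - 1) / real n) \<le> (real n - 1) / real n - 1"
    using n by (intro ln_le_minus_one) auto
  also have "\<dots> = - 1 / real n" using n by (simp add: field_simps)
  finally have l: "1 / real n \<le> ln (real n / (real n - 1))"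
    using n by (simp add: ln_div)
  have "1 + s / real n \<le> exp (s / real n)" by (rule exp_ge_add_one_self)
  also have "\<dots> \<le> exp (s * ln (real n / (real n - 1)))"
    using l assms(2) mult_left_mono[OF l assms(2)] by simp
  also have "\<dots> = (real n / (real n - 1)) powr s"
    using n by (simp add: powr_def)
  finally show ?thesis .
qed

lemma tail_bound:
  assumes "m \<ge> 1" "s \<ge> 0" "N \<ge> Suc m"
  shows "Qp s (Suc m) N \<le> ((real N - 1) / real m) powr s"
  using assms(3)
proof (induction N rule: nat_induct_at_least)
  case base then show ?case using assms by simp
next
  case (Suc N)
  have "Qp s (Suc m) (Suc N) = Qp s (Suc m) N * (1 + s / N)" using Suc(1) by (simp add: Qp_Suc)
  also have "\<dots> \<le> ((real N - 1) / real m) powr s * ((real N / (real N - 1)) powr s)"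
    using Suc.IH Suc(1) assms factor_bound[of N s]
    by (intro mult_mono) (auto simp: Qp_nonneg)
  also have "\<dots> = (real N / real m) powr s"
    using Suc(1) assms by (simp add: powr_mult[symmetric])
  finally show ?case by simp
qed

lemma head_bound:
  assumes "0 \<le> s" "s \<le> real m" "j \<le> m"
  shows "fact j * Qp s 1 (Suc j) \<le> (real m + s) ^ j"
  using assms(3)
proof (induction j)
  case 0 then show ?case by simp
next
  case (Suc j)
  have "fact (Suc j) * Qp s 1 (Suc (Suc j)) = (fact j * Qp s 1 (Suc j)) * (real (Suc j) + s)"
    by (simp add: Qp_Suc field_simps)
  also have "\<dots> \<le> (real m + s) ^ j * (real m + s)"
    using Suc assms by (intro mult_mono) (auto simp: Qp_nonneg)
  finally show ?case by (simp add: mult.commute)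
qed



lemma sum_bound:
  assumes r: "0 < r" "r < 1" and m: "(1 - r) * real m \<ge> 2" and x: "x > 0" and N: "N \<ge> Suc m"
  shows "(\<Sum>k = 1..N. measure_pmf.prob (yule_state r N)
                {xs. real (type_count k xs) > x * real N powr (1 - r)})
         \<le> 2 * (2 * real m powr r / x) ^ m"
proof -
  define s where "s = (1 - r) * real m"
  define y where "y = x * real N powr (1 - r)"
  have m1: "m \<ge> 1" using m r by (cases m) auto
  have N1: "N \<ge> 1" using N by simp
  have Npos: "real N > 0" using N1 by simp
  have ypos: "y > 0" unfolding y_def using x Npos by simp
  have s2: "s \<ge> 2" unfolding s_def using m .
  have sm: "s \<le> real m" unfolding s_def using r by (simp add: mult_left_le_one_le)
  have "(\<Sum>k = 1..N. measure_pmf.prob (yule_state r N) {xs. real (type_count k xs) > y})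
      \<le> (\<Sum>k = 1..N. fact m * Qp s k N / y ^ m)"
  proof (intro sum_mono)
    fix k assume k: "k \<in> {1..N}"
    have "measure_pmf.prob (yule_state r N) {xs. real (type_count k xs) > y}
       \<le> measure_pmf.expectation (yule_state r N) (\<lambda>xs. pochhammer (real (type_count k xs)) m) / y ^ m"
      by (rule markov[OF N1 ypos])
    also have "\<dots> \<le> fact m * Qp s k N / y ^ m"
      using E_bound[of r m N k] r m1 N1 k ypos unfolding s_def
      by (intro divide_right_mono) auto
    finally show "measure_pmf.prob (yule_state r N) {xs. real (type_count k xs) > y} \<le> fact m * Qp s k N / y ^ m" .
  qed
  also have "\<dots> = fact m * (\<Sum>k = 1..N. Qp s k N) / y ^ m"
    by (simp add: sum_divide_distrib sum_distrib_left)
  also have "\<dots> \<le> fact m * (2 * Qp s 1 N) / y ^ m"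
  proof -
    have t: "(s - 1) * (\<Sum>k = 1..N. Qp s k N) = s * Qp s 1 N - N" by (rule telescope[OF N1])
    have q0: "0 \<le> Qp s 1 N" using s2 by (simp add: Qp_nonneg)
    have "(s - 1) * (\<Sum>k = 1..N. Qp s k N) \<le> (s - 1) * (2 * Qp s 1 N)"
    proof -
      have "s * Qp s 1 N \<le> (2 * (s - 1)) * Qp s 1 N" using s2 q0 by (intro mult_right_mono) auto
      then show ?thesis using t Npos by (simp add: algebra_simps)
    qed
    then have "(\<Sum>k = 1..N. Qp s k N) \<le> 2 * Qp s 1 N"
      using s2 by (simp add: mult_le_cancel_left)
    then show ?thesis using ypos by (intro divide_right_mono mult_left_mono) auto
  qed
  also have "\<dots> = 2 * (fact m * Qp s 1 (Suc m)) * Qp s (Suc m) N / y ^ m"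
  proof -
    have "Qp s 1 N = Qp s 1 (Suc m) * Qp s (Suc m) N"
      unfolding Qp_def using N by (subst prod.atLeastLessThan_concat[symmetric, of 1 "Suc m" N]) simp_all
    then show ?thesis by simp
  qed
  also have "\<dots> \<le> 2 * (2 * real m) ^ m * (real N / real m) powr s / y ^ m"
  proof -
    have h: "fact m * Qp s 1 (Suc m) \<le> (2 * real m) ^ m"
    proof -
      have "fact m * Qp s 1 (Suc m) \<le> (real m + s) ^ m"
        using head_bound[of s m m] s2 sm by simp
      also have "\<dots> \<le> (2 * real m) ^ m" using sm s2 by (intro power_mono) auto
      finally show ?thesis .
    qed
    have tl: "Qp s (Suc m) N \<le> (real N / real m) powr s"
    proof -
      have "Qp s (Suc m) N \<le> ((real N - 1) / real m) powr s"
        using tail_bound[OF m1 _ N] s2 by simp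
      also have "\<dots> \<le> (real N / real m) powr s"
        using N m1 s2 by (intro powr_mono2 divide_right_mono) auto
      finally show ?thesis .
    qed
    have "2 * (fact m * Qp s 1 (Suc m)) * Qp s (Suc m) N \<le> 2 * (2 * real m) ^ m * (real N / real m) powr s"
      using h tl s2 by (intro mult_mono) (auto simp: Qp_nonneg)
    then show ?thesis using ypos by (intro divide_right_mono) auto
  qed
  also have "\<dots> = 2 * (2 * real m powr r / x) ^ m"
  proof -
    have mpos: "real m > 0" using m1 by simp
    have ym: "y ^ m = x ^ m * real N powr s"
      unfolding y_def s_def using Npos
      by (simp add: power_mult_distrib powr_realpow[symmetric] powr_powr)
    have "(2 * real m) ^ m = 2 ^ m * real m powr s * (real m powr r) ^ m"
    proof -
      have "real m powr s * (real m powr r) ^ m = real m powr s * real m powr (r * m)"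
        using mpos by (simp add: powr_realpow[symmetric] powr_powr)
      also have "\<dots> = real m powr (real m)"
        unfolding s_def by (simp add: powr_add[symmetric] algebra_simps)
      also have "\<dots> = real m ^ m" using mpos by (simp add: powr_realpow)
      finally show ?thesis by (simp add: power_mult_distrib)
    qed
    then show ?thesis
      unfolding ym using mpos Npos x
      by (simp add: powr_divide power_divide power_mult_distrib field_simps)
  qed
  finally show ?thesis unfolding y_def .
qed



lemma limsup_bound_m:
  assumes r: "0 < r" "r < 1" and m: "(1 - r) * real m \<ge> 2" and x: "x > 0"
  shows "limsup (\<lambda>N. ereal (\<Sum>k = 1..N.
              measure_pmf.prob (yule_state r N)
                {xs. real (type_count k xs) > x * real N powr (1 - r)}))
         \<le> ereal (2 * (2 * real m powr r / x) ^ m)"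
  apply (rule Limsup_bounded)
  unfolding eventually_sequentially
  using sum_bound[OF r m x] by auto

theorem proposition1p5:
  fixes r :: real
  assumes "0 < r" and "r < 1"
  shows "\<exists>C1 > 0. \<exists>C2 > 0. \<forall>x :: real. x \<ge> 1 \<longrightarrow>
           limsup (\<lambda>N. ereal (\<Sum>k = 1..N.
              measure_pmf.prob (yule_state r N)
                {xs. real (type_count k xs) > x * real N powr (1 - r)}))
           \<le> ereal (C1 * exp (- C2 * x powr (1 / r)))"
proof -
  define M0 where "M0 = nat \<lceil>2 / (1 - r)\<rceil>"
  have M0: "(1 - r) * real M0 \<ge> 2"
  proof -
    have "2 / (1 - r) \<le> real M0" unfolding M0_def by linarith
    then show ?thesis using assms by (simp add: field_simps)
  qed
  define D where "D = 2 * (2 * real M0 powr r) ^ M0"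
  define C1 where "C1 = 2 * exp 1 + D * exp (real M0)"
  define C2 where "C2 = (2 * exp 1) powr (- 1 / r)"
  have D0: "D \<ge> 0" unfolding D_def by simp
  have C1pos: "C1 > 0" unfolding C1_def using D0 by (simp add: add_pos_nonneg)
  have C2pos: "C2 > 0" unfolding C2_def by simp
  show ?thesis
  proof (rule exI[of _ C1], rule conjI[OF C1pos], rule exI[of _ C2], rule conjI[OF C2pos], intro allI impI)
    fix x :: real assume x1: "x \<ge> 1"
    then have xpos: "x > 0" by simp
    define t where "t = (x / (2 * exp 1)) powr (1 / r)"
    have tC: "C2 * x powr (1 / r) = t"
      unfolding t_def C2_def using xpos
      by (simp add: powr_divide powr_minus_divide)
    have t0: "t \<ge> 0" unfolding t_def by simp
    define m where "m = nat \<lfloor>t\<rfloor>"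
    have mt: "real m \<le> t" "t < real m + 1" unfolding m_def using t0 by linarith+
    let ?L = "limsup (\<lambda>N. ereal (\<Sum>k = 1..N.
              measure_pmf.prob (yule_state r N)
                {xs. real (type_count k xs) > x * real N powr (1 - r)}))"
    have "?L \<le> ereal (C1 * exp (- t))"
    proof (cases "M0 \<le> m")
      case True
      have mm: "(1 - r) * real m \<ge> 2"
        using M0 True assms by (smt (verit) mult_left_mono of_nat_mono)
      have "real m powr r \<le> t powr r" using mt t0 assms by (intro powr_mono2) auto
      also have "t powr r = x / (2 * exp 1)"
        unfolding t_def using xpos assms by (simp add: powr_powr)
      finally have mr: "2 * real m powr r / x \<le> exp (-1)"
        using xpos by (simp add: field_simps exp_minus)
      have "2 * (2 * real m powr r / x) ^ m \<le> 2 * exp (-1) ^ m"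
        using mr xpos by (intro mult_left_mono power_mono) auto
      also have "\<dots> = 2 * exp (- real m)" by (simp add: exp_of_nat_mult[symmetric])
      also have "\<dots> \<le> 2 * exp (1 - t)" using mt by simp
      also have "\<dots> = 2 * exp 1 * exp (- t)" by (simp add: exp_diff exp_minus field_simps)
      also have "\<dots> \<le> C1 * exp (- t)" unfolding C1_def using D0 by (intro mult_right_mono) auto
      finally have b: "2 * (2 * real m powr r / x) ^ m \<le> C1 * exp (- t)" .
      show ?thesis using limsup_bound_m[OF assms mm xpos] b by (meson ereal_less_eq(3) order_trans)
    next
      case False
      then have tM: "t < real M0" using mt by linarith
      have "2 * (2 * real M0 powr r / x) ^ M0 \<le> D"
        unfolding D_def using x1
        by (intro mult_left_mono power_mono) (auto simp: divide_le_eq mult_le_cancel_left1 intro: order_trans)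
      also have "\<dots> = D * exp (real M0) * exp (- real M0)" by (simp add: exp_minus)
      also have "\<dots> \<le> D * exp (real M0) * exp (- t)"
        using tM D0 by (intro mult_left_mono) auto
      also have "\<dots> \<le> C1 * exp (- t)" unfolding C1_def by (intro mult_right_mono) auto
      finally have b: "2 * (2 * real M0 powr r / x) ^ M0 \<le> C1 * exp (- t)" .
      show ?thesis using limsup_bound_m[OF assms M0 xpos] b by (meson ereal_less_eq(3) order_trans)
    qed
    then show "?L \<le> ereal (C1 * exp (- C2 * x powr (1 / r)))"
      using tC by simp
  qed
qed


end
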